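(* As $n\to\infty$, $$E_Y(\Phi_n)=n^2+(1-2\gamma)n-2n\ln n+o(n),$$ where $\gamma$ is the Euler–Mascheroni constant.
   Context: $\mathcal{BT}_n$ is the set of binary phylogenetic trees with leaves bijectively labeled by $\{1,\dots,n\}$ (rooted, every internal node with exactly two children). For $T\in\mathcal{BT}_n$, $\Phi(T)=\sum_{1\le i<j\le n}\delta_T(LCA_T(i,j))$, where $\delta_T$ is depth (arcs from the root) and $LCA$ is lowest common ancestor; $\Phi_n$ is $\Phi(T)$ for random $T\in\mathcal{BT}_n$. Under the Yule model $T$ has probability $P_Y(T)=\frac{2^{n-1}}{n!}\prod_{v\in V_{int}(T)}\frac{1}{\kappa_T(v)-1}$, with $V_{int}(T)$ the internal nodes and $\kappa_T(v)$ the number of leaves below $v$; $E_Y$ is expectation under it. *)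

theory Defs
  imports "HOL-Analysis.Analysis" "HOL-Library.Landau_Symbols"
begin

text \<open>Children are ordered in the datatype; unordered (phylogenetic) trees are
  represented canonically by requiring that the smallest leaf label of the
  left subtree is smaller than that of the right subtree.\<close>

datatype phylo = Leaf nat | Node phylo phylo

fun leaves :: "phylo \<Rightarrow> nat set" where
  "leaves (Leaf a) = {a}"
| "leaves (Node l r) = leaves l \<union> leaves r"

fun nleaves :: "phylo \<Rightarrow> nat" where
  "nleaves (Leaf a) = 1"
| "nleaves (Node l r) = nleaves l + nleaves r"

fun canonical :: "phylo \<Rightarrow> bool" where
  "canonical (Leaf a) = True"
| "canonical (Node l r) = (canonical l \<and> canonical r \<and> Min (leaves l) < Min (leaves r))"

definition BT :: "nat \<Rightarrow> phylo set" where
  "BT n = {t. leaves t = {1..n} \<and> nleaves t = n \<and> canonical t}"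

fun lca_depth :: "phylo \<Rightarrow> nat \<Rightarrow> nat \<Rightarrow> nat" where
  "lca_depth (Leaf a) i j = 0"
| "lca_depth (Node l r) i j =
     (if i \<in> leaves l \<and> j \<in> leaves l then Suc (lca_depth l i j)
      else if i \<in> leaves r \<and> j \<in> leaves r then Suc (lca_depth r i j)
      else 0)"

definition Phi :: "nat \<Rightarrow> phylo \<Rightarrow> nat" where
  "Phi n t = (\<Sum>j\<in>{1..n}. \<Sum>i\<in>{1..<j}. lca_depth t i j)"

fun yule_prod :: "phylo \<Rightarrow> real" where
  "yule_prod (Leaf a) = 1"
| "yule_prod (Node l r) =
     yule_prod l * yule_prod r / (real (nleaves (Node l r)) - 1)"

definition P_Y :: "nat \<Rightarrow> phylo \<Rightarrow> real" where
  "P_Y n t = 2 ^ (n - 1) / fact n * yule_prod t"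

definition E_Y_Phi :: "nat \<Rightarrow> real" where
  "E_Y_Phi n = (\<Sum>t\<in>BT n. P_Y n t * real (Phi n t))"

end

theory Submission
  imports Defs
begin

lemma leaves_fin: "finite (leaves t)" "leaves t \<noteq> {}"
  by (induction t) auto

lemma card_leaves_le: "card (leaves t) \<le> nleaves t"
proof (induction t)
  case (Leaf a) then show ?case by simp
next
  case (Node l r)
  have "card (leaves l \<union> leaves r) \<le> card (leaves l) + card (leaves r)" by (rule card_Un_le)
  then show ?case using Node by simp
qed

definition ee :: "nat \<Rightarrow> real" where "ee m = real m * (real m + 1) - 2 * real m * harm m"
definition ff :: "nat \<Rightarrow> real" where "ff m = fact m / 2^(m-1)"
definition gg :: "nat \<Rightarrow> real" where "gg k = ee k + real k * (real k - 1) / 2"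

lemma sum_gg: "m \<ge> 1 \<Longrightarrow> 2 * (\<Sum>k\<in>{1..<m}. gg k) = (real m - 1) * ee m"
proof (induction m rule: dec_induct)
  case base then show ?case by (simp add: ee_def harm_def)
next
  case (step m)
  have "{1..<Suc m} = insert m {1..<m}" using step by auto
  then have "2 * (\<Sum>k\<in>{1..<Suc m}. gg k) = 2 * gg m + 2 * (\<Sum>k\<in>{1..<m}. gg k)" by simp
  also have "\<dots> = 2 * gg m + (real m - 1) * ee m" using step by simp
  also have "\<dots> = (real (Suc m) - 1) * ee (Suc m)"
    using step by (simp add: gg_def ee_def harm_Suc field_simps)
  finally show ?case .
qed

lemma sum_k: "2 * (\<Sum>k\<in>{1..<m}. real k) = real m * (real m - 1)"
proof (induction m)
  case 0 then show ?case by simp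
next
  case (Suc m)
  show ?case
  proof (cases "m = 0")
    case True then show ?thesis by simp
  next
    case False
    have "{1..<Suc m} = insert m {1..<m}" using False by auto
    then show ?thesis using Suc by (simp add: algebra_simps)
  qed
qed

lemma sum_refl: "(\<Sum>k\<in>{1..<m}. real k * h (m - k)) = (\<Sum>k\<in>{1..<m}. real (m - k) * h k)"
  by (rule sum.reindex_bij_witness[where i="\<lambda>k. m - k" and j="\<lambda>k. m - k"]) auto

lemma coef: assumes "1 \<le> k" "k < m"
  shows "real ((m-1) choose (k-1)) * ff k * ff (m-k) = fact (m-1) * real k / 2^(m-2)"
proof -
  have b: "real ((m-1) choose (k-1)) = fact (m-1) / (fact (k-1) * fact (m-k))"
    using assms binomial_fact[of "k-1" "m-1", where 'a=real] by simp
  have fk: "(fact k :: real) = real k * fact (k-1)"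
    using assms by (metis Suc_diff_1 fact_Suc of_nat_Suc le_less_trans zero_less_one le_add_diff_inverse2 nat_less_le)
  have p: "(2::real)^(k-1) * 2^(m-k-1) = 2^(m-2)"
    using assms by (simp add: power_add[symmetric])
  show ?thesis unfolding b ff_def fk
    using p by (simp add: field_simps)
qed


lemma ffm: "m \<ge> 2 \<Longrightarrow> ff m = real m * fact (m-1) / (2 * 2^(m-2))"
proof -
  assume m: "m \<ge> 2"
  have "(fact m::real) = real m * fact (m-1)" using m
    by (metis Suc_diff_1 fact_Suc of_nat_Suc le_less_trans zero_less_one le_add_diff_inverse2 nat_less_le One_nat_def pos2 less_le_trans)
  moreover have "(2::real)^(m-1) = 2 * 2^(m-2)" using m
    by (metis Suc_diff_Suc Suc_1 diff_Suc_1 le_less_trans less_2_cases_iff  power_Suc nat_less_le numeral_2_eq_2 Suc_le_lessD)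
  ultimately show ?thesis by (simp add: ff_def)
qed

lemma combF: assumes m: "m \<ge> 2"
  shows "(\<Sum>k\<in>{1..<m}. real ((m-1) choose (k-1)) * (ff k * ff (m-k) / (real m - 1))) = ff m"
proof -
  have "(\<Sum>k\<in>{1..<m}. real ((m-1) choose (k-1)) * (ff k * ff (m-k) / (real m - 1)))
      = (\<Sum>k\<in>{1..<m}. fact (m-1) / (2^(m-2) * (real m - 1)) * real k)"
  proof (rule sum.cong)
    fix k assume k: "k \<in> {1..<m}"
    have "real ((m-1) choose (k-1)) * (ff k * ff (m-k) / (real m - 1))
        = (real ((m-1) choose (k-1)) * ff k * ff (m-k)) / (real m - 1)" by simp
    also have "\<dots> = fact (m-1) * real k / 2^(m-2) / (real m - 1)" using k coef[of k m] by simp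
    finally show "real ((m-1) choose (k-1)) * (ff k * ff (m-k) / (real m - 1))
       = fact (m-1) / (2^(m-2) * (real m - 1)) * real k" by simp
  qed simp
  also have "\<dots> = fact (m-1) / (2^(m-2) * (real m - 1)) * (\<Sum>k\<in>{1..<m}. real k)"
    by (simp add: sum_distrib_left)
  also have "(\<Sum>k\<in>{1..<m}. real k) = real m * (real m - 1) / 2" using sum_k[of m] by simp
  also have "fact (m-1) / (2^(m-2) * (real m - 1)) * (real m * (real m - 1) / 2) = ff m"
    using m by (simp add: ffm field_simps)
  finally show ?thesis .
qed

lemma combG: assumes m: "m \<ge> 2"
  shows "(\<Sum>k\<in>{1..<m}. real ((m-1) choose (k-1)) * (ff k * ff (m-k) * (gg k + gg (m-k)) / (real m - 1))) = ff m * ee m"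
proof -
  have "(\<Sum>k\<in>{1..<m}. real ((m-1) choose (k-1)) * (ff k * ff (m-k) * (gg k + gg (m-k)) / (real m - 1)))
      = (\<Sum>k\<in>{1..<m}. fact (m-1) / (2^(m-2) * (real m - 1)) * (real k * gg k + real k * gg (m-k)))"
  proof (rule sum.cong)
    fix k assume "k \<in> {1..<m}"
    then have c: "real ((m-1) choose (k-1)) * ff k * ff (m-k) = fact (m-1) * real k / 2^(m-2)"
      using coef[of k m] by simp
    have "real ((m-1) choose (k-1)) * (ff k * ff (m-k) * (gg k + gg (m-k)) / (real m - 1))
       = (real ((m-1) choose (k-1)) * ff k * ff (m-k)) * (gg k + gg (m-k)) / (real m - 1)" by simp
    also have "\<dots> = fact (m-1) * real k / 2^(m-2) * (gg k + gg (m-k)) / (real m - 1)" by (simp only: c)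
    finally show "real ((m-1) choose (k-1)) * (ff k * ff (m-k) * (gg k + gg (m-k)) / (real m - 1))
       = fact (m-1) / (2^(m-2) * (real m - 1)) * (real k * gg k + real k * gg (m-k))"
      by (simp add: algebra_simps)
  qed simp
  also have "\<dots> = fact (m-1) / (2^(m-2) * (real m - 1)) * ((\<Sum>k\<in>{1..<m}. real k * gg k) + (\<Sum>k\<in>{1..<m}. real k * gg (m-k)))"
    by (simp only: sum.distrib[symmetric] sum_distrib_left)
  also have "(\<Sum>k\<in>{1..<m}. real k * gg (m-k)) = (\<Sum>k\<in>{1..<m}. real (m-k) * gg k)"
    by (rule sum_refl)
  also have "(\<Sum>k\<in>{1..<m}. real k * gg k) + (\<Sum>k\<in>{1..<m}. real (m-k) * gg k) = real m * (\<Sum>k\<in>{1..<m}. gg k)"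
    by (simp add: sum.distrib[symmetric] sum_distrib_left of_nat_diff algebra_simps)
  also have "(\<Sum>k\<in>{1..<m}. gg k) = (real m - 1) * ee m / 2" using sum_gg[of m] m by simp
  also have "fact (m-1) / (2^(m-2) * (real m - 1)) * (real m * ((real m - 1) * ee m / 2)) = ff m * ee m"
    using m by (simp add: ffm field_simps)
  finally show ?thesis .
qed


definition PS :: "nat set \<Rightarrow> nat set set" where "PS S = {A. A \<subseteq> S \<and> Min S \<in> A \<and> A \<noteq> S}"

lemma sum_PS:
  fixes h :: "nat \<Rightarrow> real"
  assumes S: "finite S" "card S = m" "m \<ge> 1"
  shows "(\<Sum>A\<in>PS S. h (card A)) = (\<Sum>k\<in>{1..<m}. real ((m-1) choose (k-1)) * h k)"
proof -
  define a where "a = Min S"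
  define S' where "S' = S - {a}"
  have ne: "S \<noteq> {}" using S by auto
  have aS: "a \<in> S" using S ne a_def by auto
  have cS': "card S' = m - 1" using S aS S'_def by simp
  have fS': "finite S'" using S S'_def by simp
  have aS': "a \<notin> S'" using S'_def by simp
  have PSeq: "PS S = insert a ` (Pow S' - {S'})"
  proof
    show "PS S \<subseteq> insert a ` (Pow S' - {S'})"
    proof
      fix A assume "A \<in> PS S"
      then have A: "A \<subseteq> S" "a \<in> A" "A \<noteq> S" using a_def PS_def by auto
      then have "A = insert a (A - {a})" by auto
      moreover have "A - {a} \<in> Pow S' - {S'}" using A S'_def aS by auto
      ultimately show "A \<in> insert a ` (Pow S' - {S'})" by blast
    qed
  next
    show "insert a ` (Pow S' - {S'}) \<subseteq> PS S"
    proof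
      fix A assume "A \<in> insert a ` (Pow S' - {S'})"
      then obtain B where B: "B \<subseteq> S'" "B \<noteq> S'" "A = insert a B" by auto
      have "A \<noteq> S"
      proof
        assume "A = S"
        then have "B = S'" using B aS' S'_def by auto
        then show False using B by simp
      qed
      then show "A \<in> PS S" using B aS S'_def a_def PS_def by auto
    qed
  qed
  have inj: "inj_on (insert a) (Pow S' - {S'})"
    by (rule inj_onI) (use aS' in auto)
  have "(\<Sum>A\<in>PS S. h (card A)) = (\<Sum>B\<in>Pow S' - {S'}. h (card (insert a B)))"
    unfolding PSeq by (simp add: sum.reindex[OF inj])
  also have "\<dots> = (\<Sum>B\<in>Pow S' - {S'}. h (Suc (card B)))"
  proof (rule sum.cong)
    fix B assume "B \<in> Pow S' - {S'}"
    then have "finite B" "a \<notin> B" using fS' aS' finite_subset by auto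
    then show "h (card (insert a B)) = h (Suc (card B))" by simp
  qed simp
  also have "\<dots> = (\<Sum>j\<in>{0..<m-1}. \<Sum>B\<in>{B\<in>Pow S' - {S'}. card B = j}. h (Suc (card B)))"
  proof (rule sum.group[symmetric])
    show "finite (Pow S' - {S'})" using fS' by simp
    show "finite {0..<m-1}" by simp
    show "card ` (Pow S' - {S'}) \<subseteq> {0..<m-1}"
    proof
      fix x assume "x \<in> card ` (Pow S' - {S'})"
      then obtain B where "B \<subseteq> S'" "B \<noteq> S'" "x = card B" by auto
      then have "x < card S'" using fS' by (meson psubsetI psubset_card_mono)
      then show "x \<in> {0..<m-1}" using cS' by simp
    qed
  qed
  also have "\<dots> = (\<Sum>j\<in>{0..<m-1}. real ((m-1) choose j) * h (Suc j))"
  proof (rule sum.cong)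
    fix j assume j: "j \<in> {0..<m-1}"
    have eq: "{B\<in>Pow S' - {S'}. card B = j} = {B. B \<subseteq> S' \<and> card B = j}"
      using j cS' by auto
    have "(\<Sum>B\<in>{B\<in>Pow S' - {S'}. card B = j}. h (Suc (card B)))
        = (\<Sum>B\<in>{B. B \<subseteq> S' \<and> card B = j}. h (Suc j))" unfolding eq by simp
    also have "\<dots> = real ((m-1) choose j) * h (Suc j)"
      using n_subsets[OF fS', of j] cS' by simp
    finally show "(\<Sum>B\<in>{B\<in>Pow S' - {S'}. card B = j}. h (Suc (card B))) = real ((m-1) choose j) * h (Suc j)" .
  qed simp
  also have "\<dots> = (\<Sum>k\<in>{1..<m}. real ((m-1) choose (k-1)) * h k)"
    by (rule sum.reindex_bij_witness[where i="\<lambda>k. k - 1" and j="Suc"]) (use S in auto)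
  finally show ?thesis .
qed


definition TT :: "nat set \<Rightarrow> phylo set" where
  "TT S = {t. leaves t = S \<and> nleaves t = card S \<and> canonical t}"

lemma TT_decomp:
  assumes S: "finite S" "card S \<ge> 2"
  shows "TT S = (\<Union>A\<in>PS S. (\<lambda>(l,r). Node l r) ` (TT A \<times> TT (S - A)))"
proof
  show "TT S \<subseteq> (\<Union>A\<in>PS S. (\<lambda>(l,r). Node l r) ` (TT A \<times> TT (S - A)))"
  proof
    fix t assume t: "t \<in> TT S"
    show "t \<in> (\<Union>A\<in>PS S. (\<lambda>(l,r). Node l r) ` (TT A \<times> TT (S - A)))"
    proof (cases t)
      case (Leaf a)
      then show ?thesis using t S unfolding TT_def by auto
    next
      case (Node l r)
      have lv: "leaves l \<union> leaves r = S" "nleaves l + nleaves r = card S"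
        "canonical l" "canonical r" "Min (leaves l) < Min (leaves r)"
        using t Node unfolding TT_def by auto
      have c1: "card (leaves l) \<le> nleaves l" "card (leaves r) \<le> nleaves r"
        by (rule card_leaves_le)+
      have fl: "finite (leaves l)" "finite (leaves r)" by (rule leaves_fin)+
      have "card S + card (leaves l \<inter> leaves r) = card (leaves l) + card (leaves r)"
        using card_Un_Int[OF fl] lv by simp
      then have ci: "card (leaves l \<inter> leaves r) = 0" "card (leaves l) = nleaves l"
        "card (leaves r) = nleaves r" using lv c1 by linarith+
      have disj: "leaves l \<inter> leaves r = {}" using ci fl by simp
      have rS: "leaves r = S - leaves l" using lv disj by auto
      have ne: "leaves l \<noteq> {}" "leaves r \<noteq> {}" by (rule leaves_fin)+
      have "Min S = min (Min (leaves l)) (Min (leaves r))"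
        using lv(1) Min_Un[OF fl(1) ne(1) fl(2) ne(2)] by simp
      then have "Min S = Min (leaves l)" using lv by simp
      then have "Min S \<in> leaves l" using fl ne by simp
      moreover have "leaves l \<noteq> S" using disj ne lv by auto
      ultimately have A: "leaves l \<in> PS S" using lv unfolding PS_def by auto
      have "l \<in> TT (leaves l)" "r \<in> TT (S - leaves l)" using lv ci rS unfolding TT_def by auto
      then show ?thesis using A Node by blast
    qed
  qed
next
  show "(\<Union>A\<in>PS S. (\<lambda>(l,r). Node l r) ` (TT A \<times> TT (S - A))) \<subseteq> TT S"
  proof
    fix t assume "t \<in> (\<Union>A\<in>PS S. (\<lambda>(l,r). Node l r) ` (TT A \<times> TT (S - A)))"
    then obtain A l r where A: "A \<in> PS S" and l: "l \<in> TT A" and r: "r \<in> TT (S - A)" and t: "t = Node l r"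
      by auto
    have AS: "A \<subseteq> S" "Min S \<in> A" "A \<noteq> S" using A PS_def by auto
    have fA: "finite A" using AS S finite_subset by auto
    have cardS: "card S = card A + card (S - A)" using AS S
      by (metis card_Diff_subset fA card_mono le_add_diff_inverse)
    have neB: "S - A \<noteq> {}" using AS by auto
    have fB: "finite (S - A)" using S by simp
    have "Min A = Min S" using AS S fA
      by (metis Min_antimono Min_le antisym empty_iff subset_iff)
    moreover have "Min S < Min (S - A)"
    proof -
      have "Min (S - A) \<in> S - A" by (rule Min_in[OF fB neB])
      then have "Min (S - A) \<in> S" "Min (S - A) \<noteq> Min S" using AS by auto
      then show ?thesis using S by (metis Min_le order_le_neq_trans)
    qed
    ultimately have "Min A < Min (S - A)" by simp
    then show "t \<in> TT S" using l r t AS cardS unfolding TT_def by auto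
  qed
qed

lemma sum_TT:
  assumes S: "finite S" "card S \<ge> 2" and fin: "\<And>A. A \<in> PS S \<Longrightarrow> finite (TT A) \<and> finite (TT (S - A))"
  shows "finite (TT S)"
    "sum g (TT S) = (\<Sum>A\<in>PS S. \<Sum>l\<in>TT A. \<Sum>r\<in>TT (S - A). g (Node l r))"
proof -
  have fP: "finite (PS S)" proof (rule finite_subset)
    show "PS S \<subseteq> Pow S" unfolding PS_def by auto
  qed (use S in simp)
  have fi: "\<And>A. A \<in> PS S \<Longrightarrow> finite ((\<lambda>(l,r). Node l r) ` (TT A \<times> TT (S - A)))"
    using fin by auto
  show "finite (TT S)" unfolding TT_decomp[OF S] using fP fi by blast
  have inj: "inj_on (\<lambda>(l,r). Node l r) X" for X by (rule inj_onI) auto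
  have disj: "\<forall>A\<in>PS S. \<forall>B\<in>PS S. A \<noteq> B \<longrightarrow>
      (\<lambda>(l,r). Node l r) ` (TT A \<times> TT (S - A)) \<inter> (\<lambda>(l,r). Node l r) ` (TT B \<times> TT (S - B)) = {}"
    unfolding TT_def by auto
  have "sum g (TT S) = (\<Sum>A\<in>PS S. sum g ((\<lambda>(l,r). Node l r) ` (TT A \<times> TT (S - A))))"
    unfolding TT_decomp[OF S] by (rule sum.UNION_disjoint[OF fP _ disj]) (use fi in blast)
  also have "\<dots> = (\<Sum>A\<in>PS S. \<Sum>(l,r)\<in>TT A \<times> TT (S - A). g (Node l r))"
    by (intro sum.cong refl, subst sum.reindex[OF inj]) (simp add: comp_def case_prod_unfold)
  also have "\<dots> = (\<Sum>A\<in>PS S. \<Sum>l\<in>TT A. \<Sum>r\<in>TT (S - A). g (Node l r))"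
    by (simp add: sum.cartesian_product)
  finally show "sum g (TT S) = (\<Sum>A\<in>PS S. \<Sum>l\<in>TT A. \<Sum>r\<in>TT (S - A). g (Node l r))" .
qed


definition phiS :: "nat set \<Rightarrow> phylo \<Rightarrow> nat" where
  "phiS S t = (\<Sum>j\<in>S. \<Sum>i\<in>{i\<in>S. i<j}. lca_depth t i j)"
definition pc :: "nat set \<Rightarrow> nat" where
  "pc S = (\<Sum>j\<in>S. card {i\<in>S. i<j})"

lemma pc_card: "finite S \<Longrightarrow> 2 * pc S = card S * (card S - 1)"
proof (induction S rule: finite_linorder_max_induct)
  case empty then show ?case by (simp add: pc_def)
next
  case (insert b A)
  have bA: "b \<notin> A" using insert by auto
  have "pc (insert b A) = card {i\<in>insert b A. i<b} + (\<Sum>j\<in>A. card {i\<in>insert b A. i<j})"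
    unfolding pc_def using insert bA by simp
  also have "{i\<in>insert b A. i<b} = A" using insert by auto
  also have "(\<Sum>j\<in>A. card {i\<in>insert b A. i<j}) = pc A"
  proof -
    have "\<And>j. j \<in> A \<Longrightarrow> {i\<in>insert b A. i<j} = {i\<in>A. i<j}" using insert by auto
    then show ?thesis unfolding pc_def by simp
  qed
  finally have "pc (insert b A) = card A + pc A" .
  then show ?case using insert bA by (cases "card A") auto
qed

lemma sum_Suc_card: "(\<Sum>i\<in>X. Suc (f i)) = sum f X + card (X::'a set)"
  by (induction X rule: infinite_finite_induct) auto

lemma split_inner:
  assumes A: "finite A" "finite B" "A \<inter> B = {}" and j: "j \<in> A"
    and z: "\<And>i. i \<in> B \<Longrightarrow> f i = 0"
  shows "(\<Sum>i\<in>{i\<in>A \<union> B. i<j}. f i) = (\<Sum>i\<in>{i\<in>A. i<j}. f i)"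
proof -
  have "{i\<in>A \<union> B. i<j} = {i\<in>A. i<j} \<union> {i\<in>B. i<j}" by auto
  moreover have "(\<Sum>i\<in>{i\<in>A. i<j} \<union> {i\<in>B. i<j}. f i) = (\<Sum>i\<in>{i\<in>A. i<j}. f i) + (\<Sum>i\<in>{i\<in>B. i<j}. f i)"
    by (rule sum.union_disjoint) (use A in auto)
  moreover have "(\<Sum>i\<in>{i\<in>B. i<j}. f i) = 0" using z by simp
  ultimately show ?thesis by simp
qed

lemma phi_node:
  assumes disj: "leaves l \<inter> leaves r = {}"
  shows "phiS (leaves l \<union> leaves r) (Node l r)
     = phiS (leaves l) l + pc (leaves l) + phiS (leaves r) r + pc (leaves r)"
proof -
  define A where "A = leaves l"
  define B where "B = leaves r"
  have f: "finite A" "finite B" "A \<inter> B = {}" using leaves_fin disj A_def B_def by auto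
  have eA: "(\<Sum>i\<in>{i\<in>A \<union> B. i<j}. lca_depth (Node l r) i j)
      = (\<Sum>i\<in>{i\<in>A. i<j}. lca_depth l i j) + card {i\<in>A. i<j}" if j: "j \<in> A" for j
  proof -
    have "(\<Sum>i\<in>{i\<in>A \<union> B. i<j}. lca_depth (Node l r) i j) = (\<Sum>i\<in>{i\<in>A. i<j}. lca_depth (Node l r) i j)"
      by (rule split_inner[OF f j]) (use f j A_def B_def in auto)
    also have "\<dots> = (\<Sum>i\<in>{i\<in>A. i<j}. Suc (lca_depth l i j))"
      by (rule sum.cong) (use j A_def in auto)
    finally show ?thesis by (simp add: sum_Suc_card)
  qed
  have eB: "(\<Sum>i\<in>{i\<in>A \<union> B. i<j}. lca_depth (Node l r) i j)
      = (\<Sum>i\<in>{i\<in>B. i<j}. lca_depth r i j) + card {i\<in>B. i<j}" if j: "j \<in> B" for j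
  proof -
    have f': "finite B" "finite A" "B \<inter> A = {}" using f by auto
    have "(\<Sum>i\<in>{i\<in>A \<union> B. i<j}. lca_depth (Node l r) i j) = (\<Sum>i\<in>{i\<in>B \<union> A. i<j}. lca_depth (Node l r) i j)"
      by (simp add: Un_commute)
    also have "\<dots> = (\<Sum>i\<in>{i\<in>B. i<j}. lca_depth (Node l r) i j)"
      by (rule split_inner[OF f' j]) (use f j A_def B_def in auto)
    also have "\<dots> = (\<Sum>i\<in>{i\<in>B. i<j}. Suc (lca_depth r i j))"
      by (rule sum.cong) (use j f A_def B_def in auto)
    finally show ?thesis by (simp add: sum_Suc_card)
  qed
  have "phiS (A \<union> B) (Node l r) = (\<Sum>j\<in>A. \<Sum>i\<in>{i\<in>A \<union> B. i<j}. lca_depth (Node l r) i j)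
         + (\<Sum>j\<in>B. \<Sum>i\<in>{i\<in>A \<union> B. i<j}. lca_depth (Node l r) i j)"
    unfolding phiS_def by (rule sum.union_disjoint) (use f in auto)
  also have "\<dots> = (\<Sum>j\<in>A. (\<Sum>i\<in>{i\<in>A. i<j}. lca_depth l i j) + card {i\<in>A. i<j})
         + (\<Sum>j\<in>B. (\<Sum>i\<in>{i\<in>B. i<j}. lca_depth r i j) + card {i\<in>B. i<j})"
    using eA eB by simp
  also have "\<dots> = phiS A l + pc A + phiS B r + pc B"
    unfolding phiS_def pc_def by (simp add: sum.distrib)
  finally show ?thesis using A_def B_def by simp
qed


lemma nleaves_pos: "nleaves t \<ge> 1"
  by (induction t) auto

lemma dsum:
  fixes a b :: "phylo \<Rightarrow> real"
  shows "(\<Sum>l\<in>X. \<Sum>r\<in>Y. a l * b r / d * (p l + c + q r))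
    = ((\<Sum>l\<in>X. a l * p l) * (\<Sum>r\<in>Y. b r) + c * (\<Sum>l\<in>X. a l) * (\<Sum>r\<in>Y. b r)
       + (\<Sum>l\<in>X. a l) * (\<Sum>r\<in>Y. b r * q r)) / d"
proof -
  have h1: "(\<Sum>l\<in>X. \<Sum>r\<in>Y. a l * p l * b r) = (\<Sum>l\<in>X. a l * p l) * (\<Sum>r\<in>Y. b r)"
    by (simp add: sum_product)
  have h2: "(\<Sum>l\<in>X. \<Sum>r\<in>Y. c * (a l * b r)) = c * ((\<Sum>l\<in>X. a l) * (\<Sum>r\<in>Y. b r))"
  proof -
    have "(\<Sum>l\<in>X. \<Sum>r\<in>Y. c * (a l * b r)) = c * (\<Sum>l\<in>X. \<Sum>r\<in>Y. a l * b r)"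
      by (simp add: sum_distrib_left)
    then show ?thesis by (simp add: sum_product)
  qed
  have h3: "(\<Sum>l\<in>X. \<Sum>r\<in>Y. a l * (b r * q r)) = (\<Sum>l\<in>X. a l) * (\<Sum>r\<in>Y. b r * q r)"
    by (simp add: sum_product)
  have "(\<Sum>l\<in>X. \<Sum>r\<in>Y. a l * b r / d * (p l + c + q r))
      = (\<Sum>l\<in>X. \<Sum>r\<in>Y. (a l * p l * b r + c * (a l * b r) + a l * (b r * q r)) / d)"
    by (intro sum.cong refl) (simp add: algebra_simps)
  also have "\<dots> = (\<Sum>l\<in>X. \<Sum>r\<in>Y. (a l * p l * b r + c * (a l * b r) + a l * (b r * q r))) / d"
    by (simp add: sum_divide_distrib)
  also have "\<dots> = ((\<Sum>l\<in>X. \<Sum>r\<in>Y. a l * p l * b r) + (\<Sum>l\<in>X. \<Sum>r\<in>Y. c * (a l * b r))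
      + (\<Sum>l\<in>X. \<Sum>r\<in>Y. a l * (b r * q r))) / d"
    by (simp only: sum.distrib)
  finally show ?thesis unfolding h1 h2 h3 by (simp add: mult.assoc)
qed

lemma TT_single: "TT {a} = {Leaf a}"
proof
  show "TT {a} \<subseteq> {Leaf a}"
  proof
    fix t assume t: "t \<in> TT {a}"
    show "t \<in> {Leaf a}"
    proof (cases t)
      case (Leaf b) then show ?thesis using t TT_def by auto
    next
      case (Node l r)
      then show ?thesis using t nleaves_pos[of l] nleaves_pos[of r] TT_def by auto
    qed
  qed
qed (simp add: TT_def)

lemma main_ind:
  "\<forall>S. finite S \<longrightarrow> card S = m \<longrightarrow> m \<ge> 1 \<longrightarrow> finite (TT S) \<and>
     (\<Sum>t\<in>TT S. yule_prod t) = ff m \<and>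
     (\<Sum>t\<in>TT S. yule_prod t * real (phiS S t)) = ff m * ee m"
proof (induction m rule: less_induct)
  case (less m)
  show ?case
  proof (intro allI impI)
    fix S :: "nat set" assume S: "finite S" "card S = m" "m \<ge> 1"
    show "finite (TT S) \<and> (\<Sum>t\<in>TT S. yule_prod t) = ff m \<and>
       (\<Sum>t\<in>TT S. yule_prod t * real (phiS S t)) = ff m * ee m"
    proof (cases "m = 1")
      case True
      then obtain a where a: "S = {a}" using S card_1_singletonE by blast
      show ?thesis using True unfolding a TT_single
        by (simp add: ff_def ee_def phiS_def harm_def)
    next
      case False
      then have m2: "card S \<ge> 2" "m \<ge> 2" using S by auto
      have IH: "finite (TT A) \<and> (\<Sum>t\<in>TT A. yule_prod t) = ff (card A) \<and>
          (\<Sum>t\<in>TT A. yule_prod t * real (phiS A t)) = ff (card A) * ee (card A)"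
        if "finite A" "1 \<le> card A" "card A < m" for A
        using less that by blast
      have PSc: "finite A \<and> finite (S - A) \<and> 1 \<le> card A \<and> card A < m \<and> card (S - A) = m - card A
           \<and> 1 \<le> card (S - A) \<and> card (S - A) < m" if A: "A \<in> PS S" for A
      proof -
        have AS: "A \<subseteq> S" "Min S \<in> A" "A \<noteq> S" using A PS_def by auto
        have fA: "finite A" using AS S finite_subset by auto
        have c: "card (S - A) = m - card A" using AS S fA by (simp add: card_Diff_subset)
        have "card A < m" using AS S by (metis psubsetI psubset_card_mono)
        moreover have "card A \<ge> 1" using AS fA by (metis One_nat_def Suc_leI card_gt_0_iff empty_iff)
        ultimately show ?thesis using fA S c by auto
      qed
      have fin: "finite (TT A) \<and> finite (TT (S - A))" if "A \<in> PS S" for A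
        using IH PSc[OF that] by blast
      note ST = sum_TT[OF S(1) m2(1) fin]
      have node_eq: "yule_prod (Node l r) = yule_prod l * yule_prod r / (real m - 1)
          \<and> phiS S (Node l r) = phiS A l + pc A + phiS (S - A) r + pc (S - A)"
        if A: "A \<in> PS S" and l: "l \<in> TT A" and r: "r \<in> TT (S - A)" for A l r
      proof -
        have AS: "A \<subseteq> S" using A PS_def by auto
        have "nleaves (Node l r) = m" using l r PSc[OF A] unfolding TT_def by auto
        moreover have "S = leaves l \<union> leaves r" "leaves l \<inter> leaves r = {}"
          using l r AS unfolding TT_def by auto
        ultimately show ?thesis using phi_node[of l r] l r unfolding TT_def by auto
      qed
      have F: "(\<Sum>t\<in>TT S. yule_prod t) = ff m"
      proof -
        have "(\<Sum>t\<in>TT S. yule_prod t) = (\<Sum>A\<in>PS S. \<Sum>l\<in>TT A. \<Sum>r\<in>TT (S - A). yule_prod (Node l r))"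
          by (rule ST(2))
        also have "\<dots> = (\<Sum>A\<in>PS S. ff (card A) * ff (m - card A) / (real m - 1))"
        proof (rule sum.cong[OF refl])
          fix A assume A: "A \<in> PS S"
          have "(\<Sum>l\<in>TT A. \<Sum>r\<in>TT (S - A). yule_prod (Node l r))
              = (\<Sum>l\<in>TT A. \<Sum>r\<in>TT (S - A). yule_prod l * yule_prod r / (real m - 1))"
            by (intro sum.cong refl) (simp only: node_eq[OF A, THEN conjunct1])
          also have "\<dots> = (\<Sum>l\<in>TT A. yule_prod l) * (\<Sum>r\<in>TT (S - A). yule_prod r) / (real m - 1)"
            by (simp add: sum_product sum_divide_distrib)
          also have "\<dots> = ff (card A) * ff (m - card A) / (real m - 1)"
            using IH[of A] IH[of "S - A"] PSc[OF A] by simp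
          finally show "(\<Sum>l\<in>TT A. \<Sum>r\<in>TT (S - A). yule_prod (Node l r)) = ff (card A) * ff (m - card A) / (real m - 1)" .
        qed
        also have "\<dots> = (\<Sum>k\<in>{1..<m}. real ((m-1) choose (k-1)) * (ff k * ff (m-k) / (real m - 1)))"
          using sum_PS[OF S, of "\<lambda>k. ff k * ff (m - k) / (real m - 1)"] by simp
        also have "\<dots> = ff m" by (rule combF[OF m2(2)])
        finally show ?thesis .
      qed
      have G: "(\<Sum>t\<in>TT S. yule_prod t * real (phiS S t)) = ff m * ee m"
      proof -
        have "(\<Sum>t\<in>TT S. yule_prod t * real (phiS S t)) = (\<Sum>A\<in>PS S. \<Sum>l\<in>TT A. \<Sum>r\<in>TT (S - A). yule_prod (Node l r) * real (phiS S (Node l r)))"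
          by (rule ST(2))
        also have "\<dots> = (\<Sum>A\<in>PS S. ff (card A) * ff (m - card A) * (gg (card A) + gg (m - card A)) / (real m - 1))"
        proof (rule sum.cong[OF refl])
          fix A assume A: "A \<in> PS S"
          note P = PSc[OF A]
          have pA: "real (pc A) = real (card A) * (real (card A) - 1) / 2"
            proof -
            have "real (2 * pc A) = real (card A * (card A - 1))" using pc_card[of "A"] P by simp
            then show ?thesis using P by (simp add: of_nat_diff)
          qed
          have pB0: "real (pc (S - A)) = real (card (S - A)) * (real (card (S - A)) - 1) / 2"
          proof -
            have c1: "card (S - A) \<ge> 1" "finite (S - A)" using P by auto
            have "real (2 * pc (S - A)) = real (card (S - A) * (card (S - A) - 1))" using pc_card[of "S - A"] c1 by simp
            then show ?thesis using c1 by (simp add: of_nat_diff)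
          qed
          have pB: "real (pc (S - A)) = real (m - card A) * (real (m - card A) - 1) / 2"
            using pB0 P by simp
          have "(\<Sum>l\<in>TT A. \<Sum>r\<in>TT (S - A). yule_prod (Node l r) * real (phiS S (Node l r)))
              = (\<Sum>l\<in>TT A. \<Sum>r\<in>TT (S - A). yule_prod l * yule_prod r / (real m - 1) *
                   real (phiS A l + pc A + phiS (S - A) r + pc (S - A)))"
            by (intro sum.cong refl) (simp only: node_eq[OF A, THEN conjunct1] node_eq[OF A, THEN conjunct2])
          also have "\<dots> = (\<Sum>l\<in>TT A. \<Sum>r\<in>TT (S - A). yule_prod l * yule_prod r / (real m - 1) *
                   (real (phiS A l) + (real (pc A) + real (pc (S - A))) + real (phiS (S - A) r)))"
            by (simp add: algebra_simps)
          also have "\<dots> = ((\<Sum>l\<in>TT A. yule_prod l * real (phiS A l)) * (\<Sum>r\<in>TT (S - A). yule_prod r)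
              + (real (pc A) + real (pc (S - A))) * (\<Sum>l\<in>TT A. yule_prod l) * (\<Sum>r\<in>TT (S - A). yule_prod r)
              + (\<Sum>l\<in>TT A. yule_prod l) * (\<Sum>r\<in>TT (S - A). yule_prod r * real (phiS (S - A) r))) / (real m - 1)"
            by (rule dsum)
          also have "\<dots> = (ff (card A) * ee (card A) * ff (m - card A)
              + (real (pc A) + real (pc (S - A))) * ff (card A) * ff (m - card A)
              + ff (card A) * (ff (m - card A) * ee (m - card A))) / (real m - 1)"
            using IH[of A] IH[of "S - A"] P by simp
          also have "\<dots> = ff (card A) * ff (m - card A) * (gg (card A) + gg (m - card A)) / (real m - 1)"
            unfolding pA pB gg_def by (simp add: algebra_simps)
          finally show "(\<Sum>l\<in>TT A. \<Sum>r\<in>TT (S - A). yule_prod (Node l r) * real (phiS S (Node l r)))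
              = ff (card A) * ff (m - card A) * (gg (card A) + gg (m - card A)) / (real m - 1)" .
        qed
        also have "\<dots> = (\<Sum>k\<in>{1..<m}. real ((m-1) choose (k-1)) * (ff k * ff (m-k) * (gg k + gg (m-k)) / (real m - 1)))"
          using sum_PS[OF S, of "\<lambda>k. ff k * ff (m-k) * (gg k + gg (m-k)) / (real m - 1)"] by simp
        also have "\<dots> = ff m * ee m" by (rule combG[OF m2(2)])
        finally show ?thesis .
      qed
      show ?thesis using ST(1) F G by blast
    qed
  qed
qed


lemma EY: assumes n: "n \<ge> 1" shows "E_Y_Phi n = ee n"
proof -
  have BT: "BT n = TT {1..n}" unfolding BT_def TT_def by simp
  have Ph: "Phi n t = phiS {1..n} t" for t
  proof -
    have "\<And>j. j \<in> {1..n} \<Longrightarrow> {i\<in>{1..n}. i<j} = {1..<j}" by auto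
    then show ?thesis unfolding Phi_def phiS_def by simp
  qed
  have M: "(\<Sum>t\<in>TT {1..n}. yule_prod t * real (phiS {1..n} t)) = ff n * ee n"
    using main_ind[of n] n by simp
  have "E_Y_Phi n = (\<Sum>t\<in>TT {1..n}. 2 ^ (n - 1) / fact n * (yule_prod t * real (phiS {1..n} t)))"
    unfolding E_Y_Phi_def BT P_Y_def Ph by (simp add: mult.assoc)
  also have "\<dots> = 2 ^ (n - 1) / fact n * (ff n * ee n)"
    by (subst sum_distrib_left[symmetric]) (simp only: M)
  also have "\<dots> = ee n" by (simp add: ff_def)
  finally show ?thesis .
qed

theorem mainTheorem15:
  shows "(\<lambda>n. E_Y_Phi n - ((real n)^2 + (1 - 2 * euler_mascheroni) * real n
                              - 2 * real n * ln (real n)))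
         \<in> o(\<lambda>n. real n)"
proof (rule smalloI_tendsto)
  have ev: "eventually (\<lambda>n. -2 * (harm n - ln (real n) - euler_mascheroni) =
      (E_Y_Phi n - ((real n)^2 + (1 - 2 * euler_mascheroni) * real n
                              - 2 * real n * ln (real n))) / real n) at_top"
    using eventually_ge_at_top[of "1::nat"]
  proof eventually_elim
    case (elim n)
    then show ?case by (simp add: EY ee_def field_simps power2_eq_square)
  qed
  have "(\<lambda>n. -2 * (harm n - ln (real n) - euler_mascheroni)) \<longlonglongrightarrow> -2 * (euler_mascheroni - euler_mascheroni)"
    by (intro tendsto_intros euler_mascheroni_LIMSEQ)
  then have "(\<lambda>n. -2 * (harm n - ln (real n) - euler_mascheroni)) \<longlonglongrightarrow> 0" by simp
  then show "((\<lambda>n. (E_Y_Phi n - ((real n)^2 + (1 - 2 * euler_mascheroni) * real n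
                              - 2 * real n * ln (real n))) / real n) \<longlongrightarrow> 0) at_top"
    using tendsto_cong[OF ev] by simp
  show "eventually (\<lambda>n. real n \<noteq> 0) at_top"
    using eventually_ge_at_top[of "1::nat"] by eventually_elim simp
qed

end
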